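(* Fix $h$ in the interior of $\mathcal H$. Let $\eta$ be a Borel probability measure on $\mathcal Y_h$ with finite first moment and $\int y\,\eta(dy)=0$. Define the measure $\rho:=(S_h)_\#\bigl((1-h^\top y)\,\eta(dy)\bigr)$ on $\mathcal X_d$. Then $\rho\in\mathfrak M_d$, the measure $q_h(dx):=(1+h^\top x)\rho(dx)$ satisfies $(T_h)_\#q_h=\eta$, and $\rho$ is the unique element $\rho'\in\mathfrak M_d$ whose fiber $(T_h)_\#\bigl((1+h^\top x)\rho'(dx)\bigr)$ equals $\eta$.
   Context: Fix an integer $d\ge 2$. Let $H\in\mathbb R^{d\times(d-1)}$ have orthonormal columns spanning $T_d:=\{u\in\mathbb R^d:\mathbf 1^\top u=0\}$, and set $\gamma_i:=H^\top e_i\in\mathbb R^{d-1}$ ($i=1,\dots,d$). Let $\mathcal X_d:=\{x\in\mathbb R^{d-1}:1+\gamma_i^\top x\ge0\ \forall i\}$ and $\mathcal H:=\mathrm{conv}\{\gamma_1,\dots,\gamma_d\}$. An anchored law is a Borel probability measure $\rho$ on $\mathcal X_d$ with $\int x\,\rho(dx)=0$; $\mathfrak M_d$ is the set of anchored laws. For $h\in\mathcal H$ define $\mathcal Y_h:=\{y\in\mathbb R^{d-1}:1+(\gamma_i-h)^\top y\ge 0\ \forall i\}$, $T_h(x):=x/(1+h^\top x)$ for $x\in\mathcal X_d$ with $1+h^\top x>0$, and $S_h(y):=y/(1-h^\top y)$ for $y\in\mathcal Y_h$ (one has $1-h^\top y>0$ on $\mathcal Y_h$). *)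

theory Defs
  imports "HOL-Probability.Probability"
begin

text \<open>Setting. The index type 'm has d = CARD('m) elements (coordinates of R^d);
  the type 'n has d-1 elements. H :: real^'n^'m is a d x (d-1) matrix
  (H $ i $ j); gamma_i = H^T e_i is the i-th row of H.\<close>

definition gam :: "real^'n^'m \<Rightarrow> 'm \<Rightarrow> real^'n" where
  "gam H i = row i H"

definition admissible_H :: "real^'n^'m \<Rightarrow> bool" where
  "admissible_H H \<longleftrightarrow> transpose H ** H = mat 1
     \<and> range (\<lambda>v. H *v v) = {u :: real^'m. (\<Sum>i\<in>UNIV. u $ i) = 0}"

definition X_set :: "real^'n^'m \<Rightarrow> (real^'n) set" where
  "X_set H = {x. \<forall>i. 0 \<le> 1 + gam H i \<bullet> x}"

definition Hull_set :: "real^'n^'m \<Rightarrow> (real^'n) set" where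
  "Hull_set H = convex hull (range (gam H))"

definition Y_set :: "real^'n^'m \<Rightarrow> real^'n \<Rightarrow> (real^'n) set" where
  "Y_set H h = {y. \<forall>i. 0 \<le> 1 + (gam H i - h) \<bullet> y}"

definition T_map :: "real^'n \<Rightarrow> real^'n \<Rightarrow> real^'n" where
  "T_map h x = (1 / (1 + h \<bullet> x)) *\<^sub>R x"

definition S_map :: "real^'n \<Rightarrow> real^'n \<Rightarrow> real^'n" where
  "S_map h y = (1 / (1 - h \<bullet> y)) *\<^sub>R y"

definition anchored :: "real^'n^'m \<Rightarrow> (real^'n) measure \<Rightarrow> bool" where
  "anchored H \<rho> \<longleftrightarrow> prob_space \<rho> \<and> sets \<rho> = sets borel
     \<and> emeasure \<rho> (X_set H) = 1
     \<and> integrable \<rho> (\<lambda>x. x) \<and> (\<integral>x. x \<partial>\<rho>) = 0"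

definition fiber :: "real^'n \<Rightarrow> (real^'n) measure \<Rightarrow> (real^'n) measure" where
  "fiber h \<rho> = distr (density \<rho> (\<lambda>x. ennreal (1 + h \<bullet> x))) borel (T_map h)"

end

theory Submission imports Defs begin

lemma push_back:
  fixes M :: "'a::topological_space measure"
  assumes sM: "sets M = sets (borel::'a measure)"
  and ma: "a \<in> borel_measurable borel" and mb: "b \<in> borel_measurable borel"
  and mf: "f \<in> borel_measurable borel" and mg: "g \<in> borel_measurable borel"
  and ae: "AE x in M. 0 \<le> a x \<and> 0 \<le> b (f x) \<and> a x * b (f x) = 1 \<and> g (f x) = x"
  shows "distr (density (distr (density M (\<lambda>x. ennreal (a x))) borel f) (\<lambda>y. ennreal (b y))) borel g = M"
proof -
  have mc: "measurable M borel = measurable borel borel" by (rule measurable_cong_sets[OF sM refl])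
  have [measurable]: "a \<in> borel_measurable M" "f \<in> borel_measurable M"
    using ma mf mc by auto
  have [measurable]: "b \<in> borel_measurable borel" "g \<in> borel_measurable borel" using mb mg by auto
  have "density (distr (density M (\<lambda>x. ennreal (a x))) borel f) (\<lambda>y. ennreal (b y))
      = distr (density (density M (\<lambda>x. ennreal (a x))) (\<lambda>x. ennreal (b (f x)))) borel f"
    by (rule density_distr) auto
  also have "density (density M (\<lambda>x. ennreal (a x))) (\<lambda>x. ennreal (b (f x)))
      = density M (\<lambda>x. ennreal (a x) * ennreal (b (f x)))"
    by (rule density_density_eq) auto
  also have "\<dots> = density M (\<lambda>_. 1)"
    proof (rule density_cong)
    show "AE x in M. ennreal (a x) * ennreal (b (f x)) = 1"
      using ae by eventually_elim (auto simp: ennreal_mult'[symmetric])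
  qed auto
  also have "\<dots> = M" by (rule density_1)
  finally have "distr (density (distr (density M (\<lambda>x. ennreal (a x))) borel f) (\<lambda>y. ennreal (b y))) borel g
     = distr (distr M borel f) borel g" by simp
  also have "\<dots> = distr M borel (\<lambda>x. g (f x))" using distr_distr[of g borel borel f M] by (simp add: comp_def)
  also have "\<dots> = distr M borel (\<lambda>x. x)"
    proof (rule distr_cong_AE)
    show "AE x in M. g (f x) = x" using ae by eventually_elim auto
  qed (auto simp: mc intro: measurable_compose[OF mf mg])
  also have "\<dots> = M" by (rule distr_id2) (simp add: sM)
  finally show ?thesis .
qed


lemma gam_sum:
  fixes H :: "real^'n^'m"
  assumes "admissible_H H" shows "(\<Sum>i\<in>UNIV. gam H i) = 0"
proof -
  have "(\<Sum>i\<in>UNIV. gam H i) \<bullet> v = 0" for v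
  proof -
    have "H *v v \<in> range (\<lambda>v. H *v v)" by auto
    hence "(\<Sum>i\<in>UNIV. (H *v v) $ i) = 0" using assms unfolding admissible_H_def by auto
    moreover have "(H *v v) $ i = gam H i \<bullet> v" for i
      by (simp add: gam_def matrix_mult_dot row_def)
    ultimately show ?thesis by (simp add: inner_sum_left)
  qed
  then show ?thesis by (metis inner_eq_zero_iff)
qed

lemma hull_nonneg:
  fixes H :: "real^'n^'m"
  assumes "g \<in> Hull_set H" "x \<in> X_set H" shows "0 \<le> 1 + g \<bullet> x"
proof -
  have c: "convex {g. x \<bullet> g \<ge> -1}" by (rule convex_halfspace_ge)
  have "convex hull (range (gam H)) \<subseteq> {g. x \<bullet> g \<ge> -1}"
  proof (rule hull_minimal)
    show "range (gam H) \<subseteq> {g. x \<bullet> g \<ge> -1}"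
    proof
      fix g assume "g \<in> range (gam H)"
      then obtain i where "g = gam H i" by auto
      moreover have "0 \<le> 1 + gam H i \<bullet> x" using assms(2) by (simp add: X_set_def)
      ultimately show "g \<in> {g. x \<bullet> g \<ge> -1}" by (simp add: inner_commute)
    qed
  qed (rule c)
  then show ?thesis using assms(1) by (auto simp: Hull_set_def inner_commute)
qed

lemma interior_pos:
  fixes H :: "real^'n^'m"
  assumes "h \<in> interior (Hull_set H)" "x \<in> X_set H" shows "0 < 1 + h \<bullet> x"
proof (cases "x = 0")
  case True then show ?thesis by simp
next
  case False
  obtain e where e: "e > 0" "ball h e \<subseteq> Hull_set H" using assms(1) mem_interior by blast
  define g where "g = h - (e / 2 / norm x) *\<^sub>R x"
  have "dist h g < e" using e False by (simp add: g_def dist_norm)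
  hence "g \<in> Hull_set H" using e by auto
  hence "0 \<le> 1 + g \<bullet> x" using assms(2) hull_nonneg by blast
  also have "g \<bullet> x = h \<bullet> x - e / 2 * norm x"
    using False by (simp add: g_def inner_diff_left power2_norm_eq_inner[symmetric] power2_eq_square)
  finally show ?thesis using e False by (smt (verit) divide_pos_pos zero_less_norm_iff mult_pos_pos zero_less_numeral)
qed

lemma Y_pos:
  fixes H :: "real^'n^'m"
  assumes adm: "admissible_H H" and h: "h \<in> Hull_set H" and y: "y \<in> Y_set H h"
  shows "0 < 1 - h \<bullet> y"
proof -
  define c where "c i = 1 + (gam H i - h) \<bullet> y" for i
  have c0: "0 \<le> c i" for i using y by (simp add: c_def Y_set_def)
  have "(\<Sum>i\<in>UNIV. c i) = real CARD('m) + (\<Sum>i\<in>UNIV. gam H i) \<bullet> y - real CARD('m) * (h \<bullet> y)"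
    by (simp add: c_def sum.distrib inner_diff_left sum_subtractf inner_sum_left)
  also have "\<dots> = real CARD('m) * (1 - h \<bullet> y)" using gam_sum[OF adm] by (simp add: algebra_simps)
  finally have sc: "(\<Sum>i\<in>UNIV. c i) = real CARD('m) * (1 - h \<bullet> y)" .
  have "0 \<le> (\<Sum>i\<in>UNIV. c i)" using c0 by (simp add: sum_nonneg)
  hence ge: "0 \<le> 1 - h \<bullet> y" using sc by (simp add: zero_le_mult_iff)
  show ?thesis
  proof (rule ccontr)
    assume "\<not> ?thesis"
    hence "1 - h \<bullet> y = 0" using ge by simp
    hence "(\<Sum>i\<in>UNIV. c i) = 0" using sc by simp
    hence ci: "c i = 0" for i using c0 sum_nonneg_eq_0_iff[of UNIV c] by simp
    have cv: "convex {g. y \<bullet> g = h \<bullet> y - 1}" by (rule convex_hyperplane)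
    have "convex hull (range (gam H)) \<subseteq> {g. y \<bullet> g = h \<bullet> y - 1}"
      by (rule hull_minimal) (use ci cv in \<open>auto simp: c_def inner_diff_left inner_commute algebra_simps\<close>)
    then have "y \<bullet> h = h \<bullet> y - 1" using h by (auto simp: Hull_set_def)
    then show False by (simp add: inner_commute)
  qed
qed

lemma S_meas[measurable]: "S_map h \<in> borel_measurable borel"
  unfolding S_map_def by measurable
lemma T_meas[measurable]: "T_map h \<in> borel_measurable borel"
  unfolding T_map_def by measurable
lemma X_meas[measurable]: "X_set H \<in> sets borel"
  unfolding X_set_def by measurable
lemma Y_meas[measurable]: "Y_set H h \<in> sets borel"
  unfolding Y_set_def by measurable


lemma S_id:
  assumes "0 < 1 - h \<bullet> y"
  shows "1 + h \<bullet> S_map h y = 1 / (1 - h \<bullet> y)" "T_map h (S_map h y) = y"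
proof -
  show 1: "1 + h \<bullet> S_map h y = 1 / (1 - h \<bullet> y)"
    using assms by (simp add: S_map_def field_simps)
  show "T_map h (S_map h y) = y"
    using assms unfolding T_map_def 1 by (simp add: S_map_def)
qed

lemma T_id:
  assumes "0 < 1 + h \<bullet> x"
  shows "1 - h \<bullet> T_map h x = 1 / (1 + h \<bullet> x)" "S_map h (T_map h x) = x"
proof -
  show 1: "1 - h \<bullet> T_map h x = 1 / (1 + h \<bullet> x)"
    using assms by (simp add: T_map_def field_simps)
  show "S_map h (T_map h x) = x"
    using assms unfolding S_map_def 1 by (simp add: T_map_def)
qed

lemma S_in_X:
  assumes "y \<in> Y_set H h" "0 < 1 - h \<bullet> y"
  shows "S_map h y \<in> X_set H"
proof -
  have "0 \<le> 1 + gam H i \<bullet> S_map h y" for i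
  proof -
    have "1 + gam H i \<bullet> S_map h y = (1 + (gam H i - h) \<bullet> y) / (1 - h \<bullet> y)"
      using assms(2) by (simp add: S_map_def field_simps inner_diff_left)
    also have "\<dots> \<ge> 0" using assms by (simp add: Y_set_def)
    finally show ?thesis .
  qed
  then show ?thesis by (simp add: X_set_def)
qed

theorem theorem3p6:
  fixes H :: "real^'n^'m" and h :: "real^'n"
    and \<eta> \<rho> :: "(real^'n) measure"
  assumes "CARD('m) = CARD('n) + 1"
    and "admissible_H H"
    and "h \<in> interior (Hull_set H)"
    and "prob_space \<eta>" and "sets \<eta> = sets borel"
    and "emeasure \<eta> (Y_set H h) = 1"
    and "integrable \<eta> (\<lambda>y. y)"
    and "(\<integral>y. y \<partial>\<eta>) = 0"
    and "\<rho> = distr (density \<eta> (\<lambda>y. ennreal (1 - h \<bullet> y))) borel (S_map h)"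
  shows "anchored H \<rho>
    \<and> fiber h \<rho> = \<eta>
    \<and> (\<forall>\<rho>'. anchored H \<rho>' \<and> fiber h \<rho>' = \<eta> \<longrightarrow> \<rho>' = \<rho>)"
proof -
  note adm = assms(2)
  have hH: "h \<in> Hull_set H" using assms(3) interior_subset by blast
  interpret P: prob_space \<eta> by (rule assms(4))
  note sE = assms(5)
  have mcE: "measurable \<eta> borel = measurable borel borel" by (rule measurable_cong_sets[OF sE refl])
  have [measurable]: "S_map h \<in> borel_measurable \<eta>" unfolding mcE by measurable
  have Yev: "Y_set H h \<in> sets \<eta>" using sE by simp
  have "P.prob (Y_set H h) = 1" using assms(6) by (simp add: measure_def)
  then have aeY: "AE y in \<eta>. y \<in> Y_set H h" by (rule P.AE_prob_1)
  have aeP: "AE y in \<eta>. y \<in> Y_set H h \<and> 0 < 1 - h \<bullet> y"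
    using aeY by eventually_elim (use Y_pos[OF adm hH] in auto)
  have ma: "(\<lambda>y. 1 - h \<bullet> y) \<in> borel_measurable \<eta>" unfolding mcE by measurable
  define N where "N = density \<eta> (\<lambda>y. ennreal (1 - h \<bullet> y))"
  have sN: "sets N = sets borel" by (simp add: N_def sE)
  have mSN: "S_map h \<in> measurable N borel" unfolding measurable_cong_sets[OF sN refl] by measurable
  have rho: "\<rho> = distr N borel (S_map h)" using assms(9) by (simp add: N_def)
  have intA: "integrable \<eta> (\<lambda>y. 1 - h \<bullet> y)" using assms(7) by auto
  have intA1: "(\<integral>y. 1 - h \<bullet> y \<partial>\<eta>) = 1"
    using assms(7) assms(8) by (simp add: Bochner_Integration.integral_diff P.prob_space)
  have "emeasure \<rho> (space \<rho>) = emeasure N (space N)"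
    unfolding rho by (simp add: emeasure_distr mSN)
  also have "\<dots> = (\<integral>\<^sup>+y. ennreal (1 - h \<bullet> y) \<partial>\<eta>)"
    unfolding N_def space_density
  proof (subst emeasure_density)
    show "(\<lambda>y. ennreal (1 - h \<bullet> y)) \<in> borel_measurable \<eta>" using ma by measurable
    show "(\<integral>\<^sup>+ x. ennreal (1 - h \<bullet> x) * indicator (space \<eta>) x \<partial>\<eta>) = (\<integral>\<^sup>+ y. ennreal (1 - h \<bullet> y) \<partial>\<eta>)"
      by (rule nn_integral_cong) simp
  qed simp
  also have "\<dots> = ennreal (\<integral>y. 1 - h \<bullet> y \<partial>\<eta>)"
    by (rule nn_integral_eq_integral[OF intA]) (use aeP in \<open>eventually_elim, auto\<close>)
  also have "\<dots> = 1" using intA1 by simp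
  finally have probR: "prob_space \<rho>" by (rule prob_spaceI)
  interpret R: prob_space \<rho> by (rule probR)
  have sR: "sets \<rho> = sets borel" by (simp add: rho)
  have aeX: "AE x in \<rho>. x \<in> X_set H"
    unfolding rho
  proof (subst AE_distr_iff[OF mSN])
    show "AE x in N. S_map h x \<in> X_set H"
      unfolding N_def
    proof (subst AE_density)
      show "AE x in \<eta>. 0 < ennreal (1 - h \<bullet> x) \<longrightarrow> S_map h x \<in> X_set H"
        using aeP by eventually_elim (auto intro: S_in_X)
    qed (use ma in auto)
  qed simp
  have "R.prob (X_set H) = 1" using aeX R.AE_in_set_eq_1[of "X_set H"] sR by simp
  then have eX: "emeasure \<rho> (X_set H) = 1" using R.emeasure_eq_measure by simp
  have mid: "(\<lambda>x::real^'n. x) \<in> borel_measurable borel" by simp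
  have e1: "AE x in \<eta>. (1 - h \<bullet> x) *\<^sub>R S_map h x = x"
    using aeP by eventually_elim (simp add: S_map_def)
  have nn: "AE x in \<eta>. 0 \<le> 1 - h \<bullet> x" using aeP by eventually_elim simp
  have mg: "(\<lambda>x. (1 - h \<bullet> x) *\<^sub>R S_map h x) \<in> borel_measurable \<eta>" unfolding mcE by measurable
  have i1: "integrable \<eta> (\<lambda>x. (1 - h \<bullet> x) *\<^sub>R S_map h x)"
    by (rule integrable_cong_AE_imp[OF assms(7) mg]) (use e1 in \<open>eventually_elim, simp\<close>)
  have i2: "integrable N (S_map h)"
    unfolding N_def using integrable_density[OF _ ma nn, of "S_map h"] i1 by simp
  have intR: "integrable \<rho> (\<lambda>x. x)"
    unfolding rho using integrable_distr_eq[OF mSN mid] i2 by simp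
  have j1: "(\<integral>x. (1 - h \<bullet> x) *\<^sub>R S_map h x \<partial>\<eta>) = 0"
    using integral_cong_AE[OF mg _ e1] assms(8) by (simp add: mcE)
  have j2: "(\<integral>x. S_map h x \<partial>N) = 0"
    unfolding N_def using integral_density[OF _ ma nn, of "S_map h"] j1 by simp
  have meanR: "(\<integral>x. x \<partial>\<rho>) = 0"
    unfolding rho using integral_distr[OF mSN mid] j2 by simp
  have anc: "anchored H \<rho>" unfolding anchored_def using probR sR eX intR meanR by auto
  have fib: "fiber h \<rho> = \<eta>"
    unfolding fiber_def assms(9)
  proof (rule push_back[OF sE])
    show "AE x in \<eta>. 0 \<le> 1 - h \<bullet> x \<and> 0 \<le> 1 + h \<bullet> S_map h x \<and>
        (1 - h \<bullet> x) * (1 + h \<bullet> S_map h x) = 1 \<and> T_map h (S_map h x) = x"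
      using aeP by eventually_elim (auto simp: S_id)
  qed auto
  have uniq: "\<rho>' = \<rho>" if a: "anchored H \<rho>'" and f: "fiber h \<rho>' = \<eta>" for \<rho>'
  proof -
    interpret Q: prob_space \<rho>' using a by (simp add: anchored_def)
    have sQ: "sets \<rho>' = sets borel" using a by (simp add: anchored_def)
    have "Q.prob (X_set H) = 1" using a by (simp add: anchored_def measure_def)
    then have aeQ: "AE x in \<rho>'. x \<in> X_set H" by (rule Q.AE_prob_1)
    have "\<rho> = distr (density (fiber h \<rho>') (\<lambda>y. ennreal (1 - h \<bullet> y))) borel (S_map h)"
      using assms(9) f by simp
    also have "\<dots> = \<rho>'"
      unfolding fiber_def
    proof (rule push_back[OF sQ])
      show "AE x in \<rho>'. 0 \<le> 1 + h \<bullet> x \<and> 0 \<le> 1 - h \<bullet> T_map h x \<and>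
          (1 + h \<bullet> x) * (1 - h \<bullet> T_map h x) = 1 \<and> S_map h (T_map h x) = x"
        using aeQ
      proof eventually_elim
        case (elim x)
        have p: "0 < 1 + h \<bullet> x" using interior_pos[OF assms(3) elim] .
        show ?case using p by (simp add: T_id[OF p])
      qed
    qed auto
    finally show ?thesis by simp
  qed
  show ?thesis using anc fib uniq by blast
qed

end
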